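(* Fix a real parameter $k$. Let $G$ be a topology that is weakly consistent (with respect to $k$) and physically connected. Then $G$ is weakly connected, i.e., for any two nodes $u,v$ of $G$ there is a directed path from $u$ to $v$ consisting only of links that are active or unclassified.
   Context: A topology is a finite directed graph $G=(V,E)$ whose links $e\in E$ carry a real weight $w(e)$ and a state $s(e)\in\{\mathrm{active},\mathrm{inactive},\mathrm{unclassified}\}$; a link is classified if it is active or inactive. A path is a finite sequence of links in which the target of each link is the source of the next. $G$ is physically connected if between any two nodes there is a directed path of links in arbitrary state. $G$ is structurally consistent if it has no loops and no parallel links (two distinct links with the same source and target). For a link $ab$ from $a$ to $b$, a triangle for $ab$ is a node $c\notin\{a,b\}$ with classified links $ac$ and $cb$ such that $w(ab)>\max(w(ac),w(cb))$ and $w(ab)\ge k\cdot\min(w(ac),w(cb))$. Inactive-link constraint: every inactive link has a triangle. Active-link constraint: no active link has a triangle. $G$ is weakly consistent if it is structurally consistent and fulfills both the active-link and inactive-link constraints. *)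

theory Defs
  imports Complex_Main
begin

datatype link_state = Active | Inactive | Unclassified

text \<open>A topology: a finite directed graph with nodes of type 'n and links of type 'e
  (links are first-class objects, so parallel links and loops are representable),
  each link carrying a source, a target, a real weight and a state.\<close>
record ('n, 'e) topology =
  nodes :: "'n set"
  links :: "'e set"
  src :: "'e \<Rightarrow> 'n"
  tgt :: "'e \<Rightarrow> 'n"
  weight :: "'e \<Rightarrow> real"
  state :: "'e \<Rightarrow> link_state"

definition topology :: "('n, 'e, 'x) topology_scheme \<Rightarrow> bool" where
  "topology G \<longleftrightarrow> finite (nodes G) \<and> finite (links G) \<and>
     (\<forall>e \<in> links G. src G e \<in> nodes G \<and> tgt G e \<in> nodes G)"

definition classified :: "('n, 'e, 'x) topology_scheme \<Rightarrow> 'e \<Rightarrow> bool" where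
  "classified G e \<longleftrightarrow> state G e = Active \<or> state G e = Inactive"

fun is_path :: "('n, 'e, 'x) topology_scheme \<Rightarrow> 'n \<Rightarrow> 'e list \<Rightarrow> 'n \<Rightarrow> bool" where
  "is_path G u [] v \<longleftrightarrow> u = v"
| "is_path G u (e # es) v \<longleftrightarrow> e \<in> links G \<and> src G e = u \<and> is_path G (tgt G e) es v"

definition physically_connected :: "('n, 'e, 'x) topology_scheme \<Rightarrow> bool" where
  "physically_connected G \<longleftrightarrow>
     (\<forall>u \<in> nodes G. \<forall>v \<in> nodes G. \<exists>p. is_path G u p v)"

definition weakly_connected :: "('n, 'e, 'x) topology_scheme \<Rightarrow> bool" where
  "weakly_connected G \<longleftrightarrow>
     (\<forall>u \<in> nodes G. \<forall>v \<in> nodes G. \<exists>p. is_path G u p v \<and>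
        (\<forall>e \<in> set p. state G e = Active \<or> state G e = Unclassified))"

definition structurally_consistent :: "('n, 'e, 'x) topology_scheme \<Rightarrow> bool" where
  "structurally_consistent G \<longleftrightarrow>
     (\<forall>e \<in> links G. src G e \<noteq> tgt G e) \<and>
     (\<forall>e \<in> links G. \<forall>e' \<in> links G.
        src G e = src G e' \<and> tgt G e = tgt G e' \<longrightarrow> e = e')"

definition is_triangle :: "real \<Rightarrow> ('n, 'e, 'x) topology_scheme \<Rightarrow> 'e \<Rightarrow> 'n \<Rightarrow> bool" where
  "is_triangle k G e c \<longleftrightarrow> c \<in> nodes G \<and> c \<noteq> src G e \<and> c \<noteq> tgt G e \<and>
     (\<exists>e1 \<in> links G. \<exists>e2 \<in> links G.
        src G e1 = src G e \<and> tgt G e1 = c \<and> src G e2 = c \<and> tgt G e2 = tgt G e \<and>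
        classified G e1 \<and> classified G e2 \<and>
        weight G e > max (weight G e1) (weight G e2) \<and>
        weight G e \<ge> k * min (weight G e1) (weight G e2))"

definition has_triangle :: "real \<Rightarrow> ('n, 'e, 'x) topology_scheme \<Rightarrow> 'e \<Rightarrow> bool" where
  "has_triangle k G e \<longleftrightarrow> (\<exists>c. is_triangle k G e c)"

definition inactive_link_constraint :: "real \<Rightarrow> ('n, 'e, 'x) topology_scheme \<Rightarrow> bool" where
  "inactive_link_constraint k G \<longleftrightarrow>
     (\<forall>e \<in> links G. state G e = Inactive \<longrightarrow> has_triangle k G e)"

definition active_link_constraint :: "real \<Rightarrow> ('n, 'e, 'x) topology_scheme \<Rightarrow> bool" where
  "active_link_constraint k G \<longleftrightarrow>
     (\<forall>e \<in> links G. state G e = Active \<longrightarrow> \<not> has_triangle k G e)"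

definition weakly_consistent :: "real \<Rightarrow> ('n, 'e, 'x) topology_scheme \<Rightarrow> bool" where
  "weakly_consistent k G \<longleftrightarrow> structurally_consistent G \<and>
     active_link_constraint k G \<and> inactive_link_constraint k G"

end

theory Submission
  imports Defs
begin

lemma is_path_append:
  "is_path G u p w \<Longrightarrow> is_path G w q v \<Longrightarrow> is_path G u (p @ q) v"
  by (induction p arbitrary: u) auto

definition good :: "('n, 'e, 'x) topology_scheme \<Rightarrow> 'e list \<Rightarrow> bool" where
  "good G p \<longleftrightarrow> (\<forall>e \<in> set p. state G e = Active \<or> state G e = Unclassified)"

lemma good_append: "good G p \<Longrightarrow> good G q \<Longrightarrow> good G (p @ q)"
  unfolding good_def by auto

lemma link_good_path:
  assumes fin: "finite (links G)" and ilc: "inactive_link_constraint k G"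
  shows "e \<in> links G \<Longrightarrow> \<exists>p. is_path G (src G e) p (tgt G e) \<and> good G p"
proof (induction "card {e' \<in> links G. weight G e' < weight G e}" arbitrary: e rule: less_induct)
  case less
  show ?case
  proof (cases "state G e = Inactive")
    case False
    then have "state G e = Active \<or> state G e = Unclassified" by (cases "state G e") auto
    then show ?thesis using less.prems
      by (intro exI[of _ "[e]"]) (auto simp: good_def)
  next
    case True
    with ilc less.prems have "has_triangle k G e" unfolding inactive_link_constraint_def by auto
    then obtain e1 e2 where e12: "e1 \<in> links G" "e2 \<in> links G"
      "src G e1 = src G e" "tgt G e1 = src G e2" "tgt G e2 = tgt G e"
      "weight G e1 < weight G e" "weight G e2 < weight G e"
      unfolding has_triangle_def is_triangle_def by auto
    have lt: "card {e' \<in> links G. weight G e' < weight G x} < card {e' \<in> links G. weight G e' < weight G e}"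
      if "x \<in> links G" "weight G x < weight G e" for x
    proof (rule psubset_card_mono)
      show "finite {e' \<in> links G. weight G e' < weight G e}" using fin by simp
      show "{e' \<in> links G. weight G e' < weight G x} \<subset> {e' \<in> links G. weight G e' < weight G e}"
        using that by auto
    qed
    obtain p1 where p1: "is_path G (src G e1) p1 (tgt G e1)" "good G p1"
      using less.hyps[OF lt[OF e12(1) e12(6)] e12(1)] by blast
    obtain p2 where p2: "is_path G (src G e2) p2 (tgt G e2)" "good G p2"
      using less.hyps[OF lt[OF e12(2) e12(7)] e12(2)] by blast
    have "is_path G (src G e1) p1 (src G e2)" using p1(1) e12(4) by simp
    from is_path_append[OF this p2(1)] good_append[OF p1(2) p2(2)] e12
    show ?thesis by metis
  qed
qed

lemma path_good_path:
  assumes fin: "finite (links G)" and ilc: "inactive_link_constraint k G"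
  shows "is_path G u p v \<Longrightarrow> \<exists>q. is_path G u q v \<and> good G q"
proof (induction p arbitrary: u)
  case Nil
  then show ?case by (intro exI[of _ "[]"]) (auto simp: good_def)
next
  case (Cons e p)
  then obtain q where q: "is_path G (tgt G e) q v" "good G q" by auto
  obtain r where r: "is_path G (src G e) r (tgt G e)" "good G r"
    using link_good_path[OF fin ilc] Cons.prems by auto
  show ?case using is_path_append[OF r(1) q(1)] good_append[OF r(2) q(2)] Cons.prems by auto
qed

theorem theorem3:
  fixes k :: real and G :: "('n, 'e) topology"
  assumes "topology G"
    and "weakly_consistent k G"
    and "physically_connected G"
  shows "weakly_connected G"
proof -
  have fin: "finite (links G)" using assms(1) unfolding topology_def by auto
  have ilc: "inactive_link_constraint k G" using assms(2) unfolding weakly_consistent_def by auto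
  show ?thesis
    unfolding weakly_connected_def
  proof (intro ballI)
    fix u v assume "u \<in> nodes G" "v \<in> nodes G"
    then obtain p where "is_path G u p v" using assms(3) unfolding physically_connected_def by auto
    then show "\<exists>p. is_path G u p v \<and> (\<forall>e\<in>set p. state G e = Active \<or> state G e = Unclassified)"
      using path_good_path[OF fin ilc] unfolding good_def by blast
  qed
qed

end
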